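(* Let $p$ be an odd prime, $k\ge1$, $s\ge2$, $0\le l<p^k$ with $l=\alpha p+\beta$ ($0\le\alpha<p^{k-1}$, $0\le\beta\le p-1$), and let $0\le t'\le p-1$, $0\le\beta'\le p-1$. Define $$m_{2s-1}=p^k(p-1)-\big((p-1)(\alpha+p^{k-1}t')+\beta\big),\quad m_{2s}=p^kt',\quad m_{2s+1}=p^k(p-1)-\big((p-1)l+\beta'\big),$$ and $n_j=p^k(p-1)-m_j$ for $j\in\{2s-1,2s,2s+1\}$. Say "there is a descent at $2s-1$" if $m_{2s-1}>m_{2s}$ and $n_{2s-1}<n_{2s}$, and "there is a descent at $2s$" if $m_{2s}>m_{2s+1}$ and $n_{2s}<n_{2s+1}$. Then, with $j^k_t=t\sum_{\iota=0}^{k-1}p^\iota$: (1) if $l<\frac{p^k-1}{2}$, there is a descent at $2s-1$ if and only if $0\le t'\le\frac{p-1}{2}$ (for every $\beta'$); (2) if $l\ge\frac{p^k-1}{2}$, there is a descent at $2s-1$ if and only if $0\le t'<\frac{p-1}{2}$ (for every $\beta'$); (3) if $1\le t\le p-1$ and $j^k_{t-1}<l<j^k_t$, there is a descent at $2s$ if and only if $p-t\le t'\le p-1$ (for every $\beta'$); (4) if $0\le t\le p-1$ and $l=j^k_t$, then there is a descent at $2s$ if and only if $p-t\le t'\le p-1$ when $\beta'\le t$, and if and only if $p-t-1\le t'\le p-1$ when $\beta'>t$.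
   Context: Interpretation (not needed for the arithmetic claim): in the $p$-Bratteli diagram whose vertices are hook partitions, $m_{2s-1},m_{2s},m_{2s+1}$ are the numbers of horizontal nodes of the last three blocks (each of total size $p^k(p-1)$, $n_j$ being the number of vertical nodes) added along a path which passes, in column $k$, through a vertex indexed $l+p^kt'$ on floor $2(k+s)-1$, then the vertex indexed $l$ on floor $2(k+s)$, and ends at the vertex indexed $pl+\beta'$ on floor $2(k+s)+1$; a descent at position $j$ means block $j$ exceeds block $j+1$ in the sense $m_j>m_{j+1}$, $n_j<n_{j+1}$. *)

theory Defs
  imports Complex_Main "HOL-Computational_Algebra.Primes"
begin

text \<open>Block size p^k (p-1); horizontal node counts of the last three blocks
  (indices 2s-1, 2s, 2s+1), computed in int.\<close>

definition blk :: "nat \<Rightarrow> nat \<Rightarrow> int" where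
  "blk p k = int (p ^ k * (p - 1))"

definition m_prev :: "nat \<Rightarrow> nat \<Rightarrow> nat \<Rightarrow> nat \<Rightarrow> nat \<Rightarrow> int" where
  "m_prev p k \<alpha> \<beta> t' = blk p k - (int (p - 1) * int (\<alpha> + p ^ (k - 1) * t') + int \<beta>)"

definition m_mid :: "nat \<Rightarrow> nat \<Rightarrow> nat \<Rightarrow> int" where
  "m_mid p k t' = int (p ^ k * t')"

definition m_next :: "nat \<Rightarrow> nat \<Rightarrow> nat \<Rightarrow> nat \<Rightarrow> int" where
  "m_next p k l \<beta>' = blk p k - (int (p - 1) * int l + int \<beta>')"

definition n_of :: "nat \<Rightarrow> nat \<Rightarrow> int \<Rightarrow> int" where
  "n_of p k m = blk p k - m"

definition descent_odd :: "nat \<Rightarrow> nat \<Rightarrow> nat \<Rightarrow> nat \<Rightarrow> nat \<Rightarrow> bool" where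
  "descent_odd p k \<alpha> \<beta> t' \<longleftrightarrow>
     m_prev p k \<alpha> \<beta> t' > m_mid p k t' \<and>
     n_of p k (m_prev p k \<alpha> \<beta> t') < n_of p k (m_mid p k t')"

definition descent_even :: "nat \<Rightarrow> nat \<Rightarrow> nat \<Rightarrow> nat \<Rightarrow> nat \<Rightarrow> bool" where
  "descent_even p k l t' \<beta>' \<longleftrightarrow>
     m_mid p k t' > m_next p k l \<beta>' \<and>
     n_of p k (m_mid p k t') < n_of p k (m_next p k l \<beta>')"

definition jkt :: "nat \<Rightarrow> nat \<Rightarrow> nat \<Rightarrow> nat" where
  "jkt p k t = t * (\<Sum>i<k. p ^ i)"

end

theory Submission imports Defs begin
lemma odd_part:
 fixes h P a b t :: int
 assumes h: "h\<ge>1" and P: "P = 2*c+1" "c \<ge> 0" and a: "0\<le>a" "a\<le>P-1" and b: "0\<le>b" "b\<le>2*h"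
   and t: "0\<le>t" "t\<le>2*h"
 shows "(2*h*((2*h+1)*P) - (2*h*(a+P*t)+b) > (2*h+1)*P*t) \<longleftrightarrow> (t < h \<or> (t = h \<and> 2*(a*(2*h+1)+b) < (2*h+1)*P - 1))"
proof -
  have P1: "P \<ge> 1" using P by simp
  have Ph: "P*h > 0" using P1 h by simp
  show ?thesis
proof (cases "t < h")
  case True
  have 1: "t*P*(4*h+1) \<le> (h-1)*P*(4*h+1)" using True h P by (intro mult_right_mono) auto
  have 2: "2*h*a \<le> 2*h*(P-1)" using a h by (intro mult_left_mono) auto
  have "(2*h*((2*h+1)*P) - (2*h*(a+P*t)+b) > (2*h+1)*P*t)"
    using 1 2 b h P1 Ph by (simp add: algebra_simps del: mult_pos_pos zero_less_mult_iff) 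
  then show ?thesis using True by simp
next
  case False
  show ?thesis
  proof (cases "t = h")
    case True
    have "(2*h*((2*h+1)*P) - (2*h*(a+P*t)+b) > (2*h+1)*P*t) \<longleftrightarrow> 2*h*a + b < h*P"
      using True by (simp add: algebra_simps)
    also have "\<dots> \<longleftrightarrow> 2*(a*(2*h+1)+b) < (2*h+1)*P - 1"
    proof
      assume A: "2*h*a + b < h*P"
      have "2*a \<le> P - 1"
      proof (rule ccontr)
        assume "\<not> 2*a \<le> P-1"
        hence "2*a \<ge> P+1" using P by presburger
        hence "h*(2*a) \<ge> h*(P+1)" using h by (intro mult_left_mono) auto
        thus False using A b by (simp add: algebra_simps)
      qed
      thus "2*(a*(2*h+1)+b) < (2*h+1)*P - 1" using A by (simp add: algebra_simps)
    next
      assume A: "2*(a*(2*h+1)+b) < (2*h+1)*P - 1"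
      show "2*h*a + b < h*P"
      proof (rule ccontr)
        assume B: "\<not> 2*h*a + b < h*P"
        have "2*a \<ge> P - 1"
        proof (rule ccontr)
          assume "\<not> 2*a \<ge> P-1"
          hence "2*a \<le> P-3" using P by presburger
          hence "h*(2*a) \<le> h*(P-3)" using h by (intro mult_left_mono) auto
          thus False using B b h by (simp add: algebra_simps)
        qed
        thus False using A B by (simp add: algebra_simps)
      qed
    qed
    finally show ?thesis using True by simp
  next
    case F2: False
    hence "t \<ge> h+1" using False by simp
    have 1: "t*P*(4*h+1) \<ge> (h+1)*P*(4*h+1)" using \<open>t \<ge> h+1\<close> h P by (intro mult_right_mono) auto
    have 2: "2*h*a \<ge> 0" using a h by simp
    have "\<not>(2*h*((2*h+1)*P) - (2*h*(a+P*t)+b) > (2*h+1)*P*t)"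
      using 1 2 b h P1 Ph by (simp add: algebra_simps del: mult_pos_pos zero_less_mult_iff) 
    then show ?thesis using False F2 by simp
  qed
qed
qed
lemma even_part3:
  fixes D q J l t t' b :: int
  assumes DJ: "D*J = q - 1" and t: "1 \<le> t" "t \<le> D" and l: "(t-1)*J < l" "l < t*J"
   and b: "0 \<le> b" "b \<le> D" and tp: "0 \<le> t'" "t' \<le> D" and q: "q \<ge> 1"
  shows "(q*t' > q*D - (D*l + b)) \<longleftrightarrow> D + 1 - t \<le> t'"
proof
  assume A: "q*t' > q*D - (D*l + b)"
  show "D + 1 - t \<le> t'"
  proof (rule ccontr)
    assume "\<not> D + 1 - t \<le> t'"
    hence "t' \<le> D - t" by simp
    hence 1: "q*t' \<le> q*(D-t)" using q by (intro mult_left_mono) auto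
    have 2: "D*l \<le> D*(t*J - 1)" using l t by (intro mult_left_mono) auto
    have "D*(t*J - 1) = t*(D*J) - D" by (simp add: algebra_simps)
    hence 3: "D*(t*J - 1) = t*(q-1) - D" using DJ by simp
    show False using 1 2 3 A b t by (simp add: algebra_simps)
  qed
next
  assume A: "D + 1 - t \<le> t'"
  hence 1: "q*t' \<ge> q*(D+1-t)" using q by (intro mult_left_mono) auto
  have 2: "D*l \<ge> D*((t-1)*J + 1)" using l t by (intro mult_left_mono) auto
  have "D*((t-1)*J + 1) = (t-1)*(D*J) + D" by (simp add: algebra_simps)
  hence 3: "D*((t-1)*J + 1) = (t-1)*(q-1) + D" using DJ by simp
  show "q*t' > q*D - (D*l + b)" using 1 2 3 A b t by (simp add: algebra_simps)
qed

lemma even_part4: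
  fixes D q J l t t' b :: int
  assumes DJ: "D*J = q - 1" and t: "0 \<le> t" "t \<le> D" and l: "l = t*J"
   and b: "0 \<le> b" "b \<le> D" and tp: "0 \<le> t'" "t' \<le> D" and q: "q > D"
  shows "(q*t' > q*D - (D*l + b)) \<longleftrightarrow> (D + 1 - t \<le> t' \<or> (t' = D - t \<and> b > t))"
proof -
  have "D*l = t*(D*J)" using l by (simp add: algebra_simps)
  hence L: "D*l = t*(q-1)" using DJ by simp
  consider "D + 1 - t \<le> t'" | "t' = D - t" | "t' \<le> D - 1 - t" by linarith
  then show ?thesis
  proof cases
    case 1
    hence "q*t' \<ge> q*(D+1-t)" using q t by (intro mult_left_mono) auto
    then show ?thesis using 1 L b t q by (simp add: algebra_simps)
  next
    case 2
    hence E: "q*t' = q*D - q*t" by (simp add: right_diff_distrib)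
    have L2: "D*l = q*t - t" using L by (simp add: algebra_simps)
    show ?thesis using E L2 2 by linarith
  next
    case 3
    hence "q*t' \<le> q*(D-1-t)" using q t by (intro mult_left_mono) auto
    then show ?thesis using 3 L b t q by (simp add: algebra_simps)
  qed
qed
theorem mainTheorem3:
  fixes p k s l \<alpha> \<beta> t' \<beta>' :: nat
  assumes "prime p" and "odd p" and "k \<ge> 1" and "s \<ge> 2"
    and "l < p ^ k" and "l = \<alpha> * p + \<beta>" and "\<alpha> < p ^ (k - 1)" and "\<beta> \<le> p - 1"
    and "t' \<le> p - 1" and "\<beta>' \<le> p - 1"
  shows "(real l < (real (p ^ k) - 1) / 2 \<longrightarrow>
            (descent_odd p k \<alpha> \<beta> t' \<longleftrightarrow> real t' \<le> (real p - 1) / 2))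
       \<and> (real l \<ge> (real (p ^ k) - 1) / 2 \<longrightarrow>
            (descent_odd p k \<alpha> \<beta> t' \<longleftrightarrow> real t' < (real p - 1) / 2))
       \<and> (\<forall>t. 1 \<le> t \<and> t \<le> p - 1 \<and> jkt p k (t - 1) < l \<and> l < jkt p k t \<longrightarrow>
            (descent_even p k l t' \<beta>' \<longleftrightarrow> p - t \<le> t' \<and> t' \<le> p - 1))
       \<and> (\<forall>t. t \<le> p - 1 \<and> l = jkt p k t \<longrightarrow>
            ((\<beta>' \<le> t \<longrightarrow> (descent_even p k l t' \<beta>' \<longleftrightarrow> p - t \<le> t' \<and> t' \<le> p - 1)) \<and>
             (\<beta>' > t \<longrightarrow> (descent_even p k l t' \<beta>' \<longleftrightarrow> int p - int t - 1 \<le> int t' \<and> t' \<le> p - 1))))"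
proof -
  have p2: "p \<ge> 2" using assms(1) prime_ge_2_nat by blast
  define D where "D = int p - 1"
  have Dp: "int (p - 1) = D" using p2 D_def by simp
  obtain hn where hn: "p = 2*hn+1" using assms(2) oddE by blast
  define h where "h = int hn"
  have hD: "D = 2*h" using hn D_def h_def by simp
  have h1: "h \<ge> 1" using hn p2 h_def by simp
  define P where "P = int (p^(k-1))"
  have Podd: "odd (p^(k-1))" using assms(2) by simp
  then obtain cn where cn: "p^(k-1) = 2*cn+1" using oddE by blast
  have Pc: "P = 2 * int cn + 1" using cn P_def by simp
  have pk: "p^k = p * p^(k-1)" using assms(3) by (metis Suc_diff_1 less_le_trans power_Suc zero_less_one)
  define q where "q = int (p^k)"
  have qP0: "q = int p * P" using pk P_def q_def by simp
  have "int p = 2*h+1" using hn h_def by simp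
  hence qP: "q = (2*h+1)*P" using qP0 by simp
  define a where "a = int \<alpha>"
  define b where "b = int \<beta>"
  define t where "t = int t'"
  have a0: "0 \<le> a" "a \<le> P - 1" using assms(7) a_def P_def by auto
  have b0: "0 \<le> b" "b \<le> 2*h" using assms(8) b_def hD Dp by auto
  have t0: "0 \<le> t" "t \<le> 2*h" using assms(9) t_def hD Dp by auto
  have e1: "blk p k = q * D" unfolding blk_def q_def using Dp by simp
  have e2: "m_prev p k \<alpha> \<beta> t' = q*D - (D*(a + P*t) + b)"
    unfolding m_prev_def e1 using Dp a_def P_def t_def b_def by simp
  have e3: "m_mid p k t' = q*t" unfolding m_mid_def q_def t_def by simp
  have e4: "q*D = 2*h*((2*h+1)*P)" "q*t = (2*h+1)*P*t" "D*(a + P*t) = 2*h*(a+P*t)" using qP hD by simp_all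
  have odd_eq: "descent_odd p k \<alpha> \<beta> t' \<longleftrightarrow>
     (2*h*((2*h+1)*P) - (2*h*(a+P*t)+b) > (2*h+1)*P*t)"
    unfolding descent_odd_def n_of_def e2 e3 e4[symmetric] by linarith
  have OP: "descent_odd p k \<alpha> \<beta> t' \<longleftrightarrow> (t < h \<or> (t = h \<and> 2*(a*(2*h+1)+b) < (2*h+1)*P - 1))"
    using odd_eq odd_part[OF h1 Pc _ a0 b0 t0] by simp
  have Lr: "real l < (real (p ^ k) - 1) / 2 \<longleftrightarrow> 2*(a*(2*h+1)+b) < (2*h+1)*P - 1"
  proof -
    have "real l < (real (p ^ k) - 1) / 2 \<longleftrightarrow> 2 * real l < real (p ^ k) - 1" by auto
    also have "\<dots> \<longleftrightarrow> real_of_int (2 * int l) < real_of_int (int (p^k) - 1)" by simp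
    also have "\<dots> \<longleftrightarrow> 2 * int l < q - 1" unfolding q_def by (rule of_int_less_iff)
    finally have "real l < (real (p ^ k) - 1) / 2 \<longleftrightarrow> 2 * int l < q - 1" .
    moreover have "int l = a*(2*h+1)+b" using assms(6) hn a_def b_def h_def by (simp add: algebra_simps)
    ultimately show ?thesis using qP by simp
  qed
  have T1: "real t' \<le> (real p - 1) / 2 \<longleftrightarrow> t \<le> h" using hn t_def h_def by simp
  have T2: "real t' < (real p - 1) / 2 \<longleftrightarrow> t < h" using hn t_def h_def by simp
  have part1: "(real l < (real (p ^ k) - 1) / 2 \<longrightarrow>
            (descent_odd p k \<alpha> \<beta> t' \<longleftrightarrow> real t' \<le> (real p - 1) / 2))"
    using OP Lr T1 by auto
  have part2: "(real l \<ge> (real (p ^ k) - 1) / 2 \<longrightarrow>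
            (descent_odd p k \<alpha> \<beta> t' \<longleftrightarrow> real t' < (real p - 1) / 2))"
    using OP Lr T2 by auto
  define J where "J = int (\<Sum>i<k. p ^ i)"
  have DJ: "D*J = q - 1"
    using power_diff_1_eq[of "int p" k] unfolding D_def J_def q_def by (simp add: of_nat_sum)
  define lb where "lb = int l"
  define bb where "bb = int \<beta>'"
  have bb0: "0 \<le> bb" "bb \<le> D" using assms(10) bb_def Dp by auto
  have t0': "0 \<le> t" "t \<le> D" using t0 hD by auto
  have e5: "m_next p k l \<beta>' = q*D - (D*lb + bb)"
    unfolding m_next_def e1 using Dp lb_def bb_def by simp
  have even_eq: "descent_even p k l t' \<beta>' \<longleftrightarrow> (q*t > q*D - (D*lb + bb))"
    unfolding descent_even_def n_of_def e5 e3 by linarith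
  have jk: "int (jkt p k n) = int n * J" for n unfolding jkt_def J_def by simp
  have q1: "q \<ge> 1" using q_def p2 by simp
  have part3: "\<forall>tt. 1 \<le> tt \<and> tt \<le> p - 1 \<and> jkt p k (tt - 1) < l \<and> l < jkt p k tt \<longrightarrow>
            (descent_even p k l t' \<beta>' \<longleftrightarrow> p - tt \<le> t' \<and> t' \<le> p - 1)"
  proof (intro allI impI)
    fix tt assume A: "1 \<le> tt \<and> tt \<le> p - 1 \<and> jkt p k (tt - 1) < l \<and> l < jkt p k tt"
    have l1: "(int tt - 1)*J < lb" using A jk[of "tt-1"] lb_def by (simp add: of_nat_diff)
    have l2: "lb < int tt * J" using A jk[of "tt"] lb_def by simp
    have e: "(q*t > q*D - (D*lb + bb)) \<longleftrightarrow> D + 1 - int tt \<le> t"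
      using even_part3[OF DJ _ _ l1 l2 bb0 t0' q1] A Dp by auto
    show "descent_even p k l t' \<beta>' \<longleftrightarrow> p - tt \<le> t' \<and> t' \<le> p - 1"
      using e even_eq A assms(9) t_def D_def by auto
  qed
  have ppk: "p \<le> p^k" using p2 assms(3) by (simp add: self_le_power)
  have qD: "q > D" using ppk unfolding q_def D_def by linarith
  have part4: "\<forall>tt. tt \<le> p - 1 \<and> l = jkt p k tt \<longrightarrow>
            ((\<beta>' \<le> tt \<longrightarrow> (descent_even p k l t' \<beta>' \<longleftrightarrow> p - tt \<le> t' \<and> t' \<le> p - 1)) \<and>
             (\<beta>' > tt \<longrightarrow> (descent_even p k l t' \<beta>' \<longleftrightarrow> int p - int tt - 1 \<le> int t' \<and> t' \<le> p - 1)))"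
  proof (intro allI impI)
    fix tt assume A: "tt \<le> p - 1 \<and> l = jkt p k tt"
    have l1: "lb = int tt * J" using A jk lb_def by simp
    have e: "(q*t > q*D - (D*lb + bb)) \<longleftrightarrow> (D + 1 - int tt \<le> t \<or> (t = D - int tt \<and> bb > int tt))"
      using even_part4[OF DJ _ _ l1 bb0 t0' qD] A Dp by auto
    show "((\<beta>' \<le> tt \<longrightarrow> (descent_even p k l t' \<beta>' \<longleftrightarrow> p - tt \<le> t' \<and> t' \<le> p - 1)) \<and>
             (\<beta>' > tt \<longrightarrow> (descent_even p k l t' \<beta>' \<longleftrightarrow> int p - int tt - 1 \<le> int t' \<and> t' \<le> p - 1)))"
      using e even_eq A assms(9) t_def D_def bb_def by auto
  qed
  show ?thesis using part1 part2 part3 part4 by blast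
qed
end
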